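(* Let $\beta^*\approx1.5437$ be the real root of $x^3-2x^2+2x=2$. If $\beta\in(3/2,\beta^*]$, then $S_\beta$ has non-empty interior, and each hole of $S_\beta$ has the form $f_{\vec q_i}^n(H)$ for some $i\in\{0,1,2\}$ and some integer $n\ge0$.
   Context: $\vec q_0=(0,0)$, $\vec q_1=(1,0)$, $\vec q_2=(0,1)$, $f_{\vec q_i}(\vec z)=(\vec z+\vec q_i)/\beta$, and $S_\beta$ is the attractor of this IFS (the unique nonempty compact set with $S_\beta=\bigcup_i f_{\vec q_i}(S_\beta)$). $\Delta$ is the convex hull of $S_\beta$, the closed triangle with vertices $(0,0)$, $(\frac1{\beta-1},0)$, $(0,\frac1{\beta-1})$. $H=\Delta\setminus\bigcup_{i=0}^2 f_{\vec q_i}(\Delta)$ is the central hole, which equals $\{(x,y):x<\frac1\beta,\ y<\frac1\beta,\ x+y>\frac{1}{\beta(\beta-1)}\}$. A hole of $S_\beta$ means a connected component of $\Delta\setminus S_\beta$. *)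

theory Defs
  imports "HOL-Analysis.Analysis"
begin

definition qv :: "nat \<Rightarrow> real \<times> real" where
  "qv i = (if i = 1 then (1, 0) else if i = 2 then (0, 1) else (0, 0))"

definition fq :: "real \<Rightarrow> nat \<Rightarrow> real \<times> real \<Rightarrow> real \<times> real" where
  "fq \<beta> i z = (1 / \<beta>) *\<^sub>R (z + qv i)"

definition S_beta :: "real \<Rightarrow> (real \<times> real) set" where
  "S_beta \<beta> = (THE S. S \<noteq> {} \<and> compact S \<and> S = (\<Union>i\<in>{0,1,2}. fq \<beta> i ` S))"

definition Delta :: "real \<Rightarrow> (real \<times> real) set" where
  "Delta \<beta> = convex hull (S_beta \<beta>)"

definition Hc :: "real \<Rightarrow> (real \<times> real) set" where
  "Hc \<beta> = Delta \<beta> - (\<Union>i\<in>{0,1,2}. fq \<beta> i ` Delta \<beta>)"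

definition is_hole :: "real \<Rightarrow> (real \<times> real) set \<Rightarrow> bool" where
  "is_hole \<beta> C \<longleftrightarrow> (\<exists>x \<in> Delta \<beta> - S_beta \<beta>.
      C = connected_component_set (Delta \<beta> - S_beta \<beta>) x)"

end

theory Submission
  imports Defs
begin

lemma dist_fq:
  assumes "0 < \<beta>"
  shows "dist (fq \<beta> i a) (fq \<beta> i b) = dist a b / \<beta>"
proof -
  have "fq \<beta> i a - fq \<beta> i b = (1/\<beta>) *\<^sub>R (a - b)"
    unfolding fq_def by (simp add: algebra_simps)
  then show ?thesis using assms by (simp add: dist_norm)
qed

lemma attractor_sub:
  fixes A B :: "(real \<times> real) set"
  assumes b: "1 < \<beta>" and cA: "compact A" and fA: "A = (\<Union>i\<in>{0,1,2}. fq \<beta> i ` A)"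
    and cB: "compact B" and nB: "B \<noteq> {}" and fB: "B = (\<Union>i\<in>{0,1,2}. fq \<beta> i ` B)"
  shows "A \<subseteq> B"
proof
  define D where "D = diameter (A \<union> B)"
  have bd: "bounded (A \<union> B)" using cA cB by (simp add: compact_imp_bounded)
  have Dd: "\<And>x y. x \<in> A \<Longrightarrow> y \<in> B \<Longrightarrow> dist x y \<le> D"
    unfolding D_def using bd diameter_bounded_bound by blast
  have claim: "\<forall>x\<in>A. \<exists>y\<in>B. dist x y \<le> D / \<beta>^n" for n
  proof (induction n)
    case 0
    then show ?case using nB Dd by auto
  next
    case (Suc n)
    show ?case
    proof
      fix x assume "x \<in> A"
      then obtain i x' where i: "i \<in> {0,1,2}" and x': "x' \<in> A" and xe: "x = fq \<beta> i x'"
        using fA by blast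
      obtain y' where y': "y' \<in> B" and dy: "dist x' y' \<le> D / \<beta>^n" using Suc x' by blast
      have "fq \<beta> i y' \<in> B" using fB i y' by blast
      moreover have "dist x (fq \<beta> i y') \<le> D / \<beta>^Suc n"
      proof -
        have "dist x (fq \<beta> i y') = dist x' y' / \<beta>" using xe dist_fq b by simp
        also have "\<dots> \<le> (D / \<beta>^n) / \<beta>" using dy b by (intro divide_right_mono) auto
        finally show ?thesis by (simp add: field_simps)
      qed
      ultimately show "\<exists>y\<in>B. dist x y \<le> D / \<beta>^Suc n" by blast
    qed
  qed
  fix x assume xA: "x \<in> A"
  have D0: "0 \<le> D" using xA nB Dd by (meson dist_not_less_zero ex_in_conv order_trans linorder_not_le)
  have "x \<in> closure B"
    unfolding closure_approachable
  proof (intro allI impI)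
    fix e :: real assume e: "0 < e"
    obtain n where n: "(1/\<beta>)^n < e / (D+1)"
      using real_arch_pow_inv[of "e/(D+1)" "1/\<beta>"] e D0 b by auto
    obtain y where y: "y \<in> B" "dist x y \<le> D / \<beta>^n" using claim xA by blast
    have "D / \<beta>^n \<le> (D+1) * (1/\<beta>)^n" using b by (simp add: field_simps power_divide)
    also have "\<dots> < (D+1) * (e/(D+1))" using n D0 by (intro mult_strict_left_mono) auto
    also have "\<dots> = e" using D0 by simp
    finally show "\<exists>y\<in>B. dist y x < e" using y by (metis dist_commute le_less_trans)
  qed
  then show "x \<in> B" using cB by (simp add: compact_imp_closed)
qed


definition cc :: "real \<Rightarrow> real" where "cc \<beta> = 1/(\<beta>-1)"
definition rr :: "real \<Rightarrow> nat \<Rightarrow> real" where "rr \<beta> n = 1/\<beta>^Suc n"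
definition ct :: "real \<Rightarrow> real \<times> real \<Rightarrow> real" where "ct \<beta> z = cc \<beta> - fst z - snd z"
definition hp :: "real \<Rightarrow> nat \<Rightarrow> nat \<Rightarrow> real \<times> real \<Rightarrow> bool" where
 "hp \<beta> i n z = (if i = 1 then snd z < rr \<beta> n \<and> ct \<beta> z < rr \<beta> n \<and> fst z < cc \<beta> - cc \<beta> * rr \<beta> n
   else if i = 2 then fst z < rr \<beta> n \<and> ct \<beta> z < rr \<beta> n \<and> snd z < cc \<beta> - cc \<beta> * rr \<beta> n
   else fst z < rr \<beta> n \<and> snd z < rr \<beta> n \<and> ct \<beta> z < cc \<beta> - cc \<beta> * rr \<beta> n)"
definition TT :: "real \<Rightarrow> (real \<times> real) set" where
  "TT \<beta> = {z. 0 \<le> fst z \<and> 0 \<le> snd z \<and> 0 \<le> ct \<beta> z}"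
definition UU :: "real \<Rightarrow> (real \<times> real) set" where
  "UU \<beta> = {z. \<exists>i\<in>{0,1,2}. \<exists>n. hp \<beta> i n z}"
definition KK :: "real \<Rightarrow> (real \<times> real) set" where
  "KK \<beta> = TT \<beta> - UU \<beta>"
definition gq :: "real \<Rightarrow> nat \<Rightarrow> real \<times> real \<Rightarrow> real \<times> real" where
  "gq \<beta> i z = \<beta> *\<^sub>R z - qv i"

lemma fq_gq: "0 < \<beta> \<Longrightarrow> fq \<beta> i (gq \<beta> i z) = z"
  unfolding fq_def gq_def by (simp add: algebra_simps)
lemma gq_fq: "0 < \<beta> \<Longrightarrow> gq \<beta> i (fq \<beta> i z) = z"
  unfolding fq_def gq_def by (simp add: algebra_simps)
lemma mem_fq_image: "0 < \<beta> \<Longrightarrow> z \<in> fq \<beta> i ` X \<longleftrightarrow> gq \<beta> i z \<in> X"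
proof
  assume "0 < \<beta>" "z \<in> fq \<beta> i ` X" then show "gq \<beta> i z \<in> X" by (auto simp: gq_fq)
next
  assume "0 < \<beta>" "gq \<beta> i z \<in> X"
  then have "fq \<beta> i (gq \<beta> i z) \<in> fq \<beta> i ` X" by blast
  then show "z \<in> fq \<beta> i ` X" using fq_gq \<open>0 < \<beta>\<close> by simp
qed

lemma gq_coords:
  fixes \<beta> :: real and z :: "real \<times> real"
  shows "fst (gq \<beta> 0 z) = \<beta> * fst z" "snd (gq \<beta> 0 z) = \<beta> * snd z"
   "fst (gq \<beta> 1 z) = \<beta> * fst z - 1" "snd (gq \<beta> 1 z) = \<beta> * snd z"
   "fst (gq \<beta> 2 z) = \<beta> * fst z" "snd (gq \<beta> 2 z) = \<beta> * snd z - 1"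
  by (simp_all add: gq_def qv_def)

lemma hp_simps:
  "hp \<beta> 0 n z = (fst z < rr \<beta> n \<and> snd z < rr \<beta> n \<and> ct \<beta> z < cc \<beta> - cc \<beta> * rr \<beta> n)"
  "hp \<beta> 1 n z = (snd z < rr \<beta> n \<and> ct \<beta> z < rr \<beta> n \<and> fst z < cc \<beta> - cc \<beta> * rr \<beta> n)"
  "hp \<beta> 2 n z = (fst z < rr \<beta> n \<and> ct \<beta> z < rr \<beta> n \<and> snd z < cc \<beta> - cc \<beta> * rr \<beta> n)"
  by (simp_all add: hp_def)

lemma hp_simps_Suc0:
  "hp \<beta> (Suc 0) n z = (snd z < rr \<beta> n \<and> ct \<beta> z < rr \<beta> n \<and> fst z < cc \<beta> - cc \<beta> * rr \<beta> n)"
  by (simp add: hp_def)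

lemma gq_coords_Suc0:
  fixes \<beta> :: real and z :: "real \<times> real"
  shows "fst (gq \<beta> (Suc 0) z) = \<beta> * fst z - 1" "snd (gq \<beta> (Suc 0) z) = \<beta> * snd z"
  by (simp_all add: gq_def qv_def)

lemma three_cases: "i \<in> {0,1,2::nat} \<Longrightarrow> (i = 0 \<Longrightarrow> P) \<Longrightarrow> (i = 1 \<Longrightarrow> P) \<Longrightarrow> (i = 2 \<Longrightarrow> P) \<Longrightarrow> P"
  by auto

context
  fixes \<beta> :: real
  assumes b1: "3/2 < \<beta>" and b2: "\<beta> < 15437/10000" and b3: "\<beta>^3 - 2*\<beta>^2 + 2*\<beta> \<le> 2"
begin

lemma bpos: "0 < \<beta>" "1 < \<beta>" "\<beta> < 2" using b1 b2 by auto

lemma c_eq: "cc \<beta> * \<beta> = cc \<beta> + 1" "cc \<beta> * (\<beta> - 1) = 1"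
  using bpos unfolding cc_def by (auto simp: field_simps)

lemma ct_gq:
  shows "ct \<beta> (gq \<beta> (Suc 0) z) = \<beta> * ct \<beta> z" "ct \<beta> (gq \<beta> 0 z) = \<beta> * ct \<beta> z - 1"
    "ct \<beta> (gq \<beta> 1 z) = \<beta> * ct \<beta> z" "ct \<beta> (gq \<beta> 2 z) = \<beta> * ct \<beta> z"
  unfolding ct_def gq_coords gq_coords_Suc0 using c_eq by (auto simp: algebra_simps)

lemma rr_Suc: "rr \<beta> (Suc n) = rr \<beta> n / \<beta>"
  unfolding rr_def by simp

lemma rr_pos: "0 < rr \<beta> n"
  unfolding rr_def using bpos by simp

lemma hp_gq_same: "i \<in> {0,1,2} \<Longrightarrow> hp \<beta> i n (gq \<beta> i z) \<longleftrightarrow> hp \<beta> i (Suc n) z"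
proof -
  have e: "\<And>u v. u < v \<longleftrightarrow> u / \<beta> < v / \<beta>" using bpos by (simp add: divide_less_cancel)
  have f1: "\<beta> * u < v \<longleftrightarrow> u < v / \<beta>" for u v using bpos by (simp add: field_simps)
  have f2: "\<beta> * u - 1 < v \<longleftrightarrow> u < (v+1) / \<beta>" for u v using bpos by (simp add: field_simps)
  have f3: "(cc \<beta> - cc \<beta> * r + 1) / \<beta> = cc \<beta> - cc \<beta> * (r / \<beta>)" for r
    using c_eq bpos by (simp add: field_simps)
  assume "i \<in> {0,1,2}"
  then show ?thesis
    by (rule three_cases) (simp_all only: hp_simps rr_Suc gq_coords ct_gq f1 f2 f3)
qed


lemma Pa: "\<beta>^3 - 2*\<beta>^2 - \<beta> + 3 \<ge> 0"
proof -
  have h1: "0 \<le> (31 - 20*\<beta>) * (1 + 2*\<beta> - \<beta>^2)"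
  proof (rule mult_nonneg_nonneg)
    show "0 \<le> 31 - 20*\<beta>" using b2 by simp
    have "\<beta>^2 \<le> \<beta> * 2" using bpos by (simp add: power2_eq_square)
    then show "0 \<le> 1 + 2*\<beta> - \<beta>^2" by simp
  qed
  have h2: "0 \<le> (2*\<beta> - 3) * (2*\<beta> - 1)" using b1 by (intro mult_nonneg_nonneg) auto
  have e1: "(31 - 20*\<beta>) * (1 + 2*\<beta> - \<beta>^2) = 20*\<beta>^3 - 71*\<beta>^2 + 42*\<beta> + 31"
    by (simp add: algebra_simps power2_eq_square power3_eq_cube)
  have e2: "(2*\<beta> - 3) * (2*\<beta> - 1) = 4*\<beta>^2 - 8*\<beta> + 3"
    by (simp add: algebra_simps power2_eq_square)
  show ?thesis using h1 h2 e1 e2 by linarith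
qed

lemma Pb: "\<beta>^4 - 2*\<beta>^3 + 2 \<ge> 0"
proof -
  have "\<beta>^4 - 2*\<beta>^3 + 2 = ((2*\<beta> - 3)^2 * (4*\<beta>^2 + 4*\<beta> + 3) + 5) / 16"
    by (simp add: algebra_simps power2_eq_square power3_eq_cube power4_eq_xxxx)
  moreover have "0 \<le> (2*\<beta> - 3)^2 * (4*\<beta>^2 + 4*\<beta> + 3)" using bpos by (intro mult_nonneg_nonneg) auto
  ultimately show ?thesis by simp
qed

lemma P0: "(2 - \<beta>) * \<beta>^2 - 2 * (\<beta> - 1) \<ge> 0"
proof -
  have "(2 - \<beta>) * \<beta>^2 - 2 * (\<beta> - 1) = -(\<beta>^3 - 2*\<beta>^2 + 2*\<beta> - 2)"
    by (simp add: algebra_simps power2_eq_square power3_eq_cube)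
  then show ?thesis using b3 by linarith
qed

lemma rr_vals: "rr \<beta> 0 = 1/\<beta>" "rr \<beta> 1 = 1/\<beta>^2" "rr \<beta> 2 = 1/\<beta>^3" "rr \<beta> 3 = 1/\<beta>^4"
  unfolding rr_def by (simp_all add: numeral_eq_Suc)

lemma nz: "\<beta> \<noteq> 0" "\<beta> - 1 \<noteq> 0" using bpos by auto

lemma K0: "cc \<beta> - 1 \<ge> 2 * rr \<beta> 1"
proof -
  have "(cc \<beta> - 1 - 2 * rr \<beta> 1) * (\<beta>^2 * (\<beta> - 1)) = ((2 - \<beta>) * \<beta>^2 - 2 * (\<beta> - 1))"
    unfolding rr_vals cc_def using nz by (simp add: field_simps)
  moreover have "0 < \<beta>^2 * (\<beta> - 1)" using bpos by simp
  ultimately show ?thesis using P0 by (smt (verit) zero_le_mult_iff)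
qed

lemma cs: "cc \<beta> * (\<beta> - 1) = 1" "rr \<beta> 1 * \<beta>^2 = 1" "rr \<beta> 2 * \<beta>^3 = 1"
  unfolding rr_vals cc_def using nz by simp_all

lemma Ka: "2 * (cc \<beta> * rr \<beta> 1) - (cc \<beta> - 1) \<ge> rr \<beta> 1"
proof -
  have "(2 * (cc \<beta> * rr \<beta> 1) - (cc \<beta> - 1) - rr \<beta> 1) * (\<beta>^2 * (\<beta> - 1)) =
     2 * (cc \<beta> * (\<beta> - 1)) * (rr \<beta> 1 * \<beta>^2) - (cc \<beta> * (\<beta> - 1)) * \<beta>^2 + \<beta>^2 * (\<beta> - 1) - (rr \<beta> 1 * \<beta>^2) * (\<beta> - 1)"
    by (simp add: algebra_simps)
  also have "\<dots> = \<beta>^3 - 2*\<beta>^2 - \<beta> + 3" unfolding cs by (simp add: algebra_simps power2_eq_square power3_eq_cube)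
  finally have e: "(2 * (cc \<beta> * rr \<beta> 1) - (cc \<beta> - 1) - rr \<beta> 1) * (\<beta>^2 * (\<beta> - 1)) = \<beta>^3 - 2*\<beta>^2 - \<beta> + 3" .
  have "0 < \<beta>^2 * (\<beta> - 1)" using bpos by simp
  then show ?thesis using Pa e by (smt (verit) zero_le_mult_iff)
qed

lemma Kb: "cc \<beta> * rr \<beta> 1 + cc \<beta> * rr \<beta> 2 - (cc \<beta> - 1) \<ge> rr \<beta> 2"
proof -
  have "(cc \<beta> * rr \<beta> 1 + cc \<beta> * rr \<beta> 2 - (cc \<beta> - 1) - rr \<beta> 2) * (\<beta>^3 * (\<beta> - 1)) =
     (cc \<beta> * (\<beta> - 1)) * (rr \<beta> 1 * \<beta>^2) * \<beta> + (cc \<beta> * (\<beta> - 1)) * (rr \<beta> 2 * \<beta>^3) - (cc \<beta> * (\<beta> - 1)) * \<beta>^3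
      + \<beta>^3 * (\<beta> - 1) - (rr \<beta> 2 * \<beta>^3) * (\<beta> - 1)"
    by (simp add: algebra_simps power2_eq_square power3_eq_cube)
  also have "\<dots> = \<beta>^4 - 2*\<beta>^3 + 2" unfolding cs by (simp add: algebra_simps power2_eq_square power3_eq_cube power4_eq_xxxx)
  finally have e: "(cc \<beta> * rr \<beta> 1 + cc \<beta> * rr \<beta> 2 - (cc \<beta> - 1) - rr \<beta> 2) * (\<beta>^3 * (\<beta> - 1)) = \<beta>^4 - 2*\<beta>^3 + 2" .
  have "0 < \<beta>^3 * (\<beta> - 1)" using bpos by simp
  then show ?thesis using Pb e by (smt (verit) zero_le_mult_iff)
qed

lemma rr_mono: "n \<le> m \<Longrightarrow> rr \<beta> m \<le> rr \<beta> n"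
  unfolding rr_def using bpos by (simp add: frac_le power_increasing)

lemma rr_lt: "n < m \<Longrightarrow> rr \<beta> m \<le> rr \<beta> n / \<beta>"
proof -
  assume "n < m"
  then have "Suc n \<le> m" by simp
  then have "rr \<beta> m \<le> rr \<beta> (Suc n)" by (rule rr_mono)
  then show ?thesis by (simp add: rr_Suc)
qed

lemma Kc: "cc \<beta> - 1 \<ge> rr \<beta> 1 + 2 * rr \<beta> 3"
proof -
  have e: "rr \<beta> 3 * \<beta>^2 = rr \<beta> 1" unfolding rr_vals using nz by (simp add: field_simps power4_eq_xxxx power2_eq_square)
  have "(3/2)*(3/2) \<le> \<beta>*\<beta>" using b1 by (intro mult_mono) auto
  then have "2 \<le> \<beta>^2" by (simp add: power2_eq_square)
  then have "rr \<beta> 3 * 2 \<le> rr \<beta> 3 * \<beta>^2" using rr_pos[of 3] by (intro mult_left_mono) auto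
  then show ?thesis using K0 e by linarith
qed

lemma Kd: "cc \<beta> - 1 \<ge> 3 * rr \<beta> 2"
proof -
  have e: "rr \<beta> 2 * \<beta> = rr \<beta> 1" unfolding rr_vals using nz by (simp add: field_simps power3_eq_cube power2_eq_square)
  have "rr \<beta> 2 * 3 \<le> rr \<beta> 2 * (2 * \<beta>)" using rr_pos[of 2] b1 by (intro mult_left_mono) auto
  then show ?thesis using K0 e by linarith
qed

lemma rr_le1: "n \<ge> 1 \<Longrightarrow> rr \<beta> n \<le> rr \<beta> 1" by (rule rr_mono)
lemma rr0_lt1: "rr \<beta> n < 1"
proof -
  have "rr \<beta> n \<le> rr \<beta> 0" by (rule rr_mono) simp
  also have "\<dots> < 1" unfolding rr_vals using bpos by simp
  finally show ?thesis .
qed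

lemma key:
  assumes "a2 + b + t = cc \<beta> - 1" "b < rr \<beta> n" "b < rr \<beta> m" "t < rr \<beta> n" "a2 < rr \<beta> m"
    "b + t > cc \<beta> * rr \<beta> n" "a2 + b > cc \<beta> * rr \<beta> m" "n \<ge> 1" "m \<ge> 1"
  shows False
proof -
  have n: "n = 1 \<or> n = 2 \<or> n \<ge> 3" and m: "m = 1 \<or> m = 2 \<or> m \<ge> 3" using assms(8,9) by auto
  have r2: "k \<ge> 2 \<Longrightarrow> rr \<beta> k \<le> rr \<beta> 2" for k by (rule rr_mono)
  have r3: "k \<ge> 3 \<Longrightarrow> rr \<beta> k \<le> rr \<beta> 3" for k by (rule rr_mono)
  have r23: "rr \<beta> 3 \<le> rr \<beta> 2" by (rule rr_mono) simp
  from n m show False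
  proof (elim disjE)
    assume "n = 1" "m = 1" then show False using assms Ka by simp
  next
    assume "n = 1" "m = 2" then show False using assms Kb by simp
  next
    assume "n = 1" "m \<ge> 3" then show False using assms Kc r3[of m] by simp
  next
    assume "n = 2" "m = 1" then show False using assms Kb by simp
  next
    assume "n = 2" "m = 2" then show False using assms Kd by simp
  next
    assume "n = 2" "m \<ge> 3" then show False using assms Kd r3[of m] r23 by simp
  next
    assume "n \<ge> 3" "m = 1" then show False using assms Kc r3[of n] by simp
  next
    assume "n \<ge> 3" "m = 2" then show False using assms Kd r3[of n] r23 by simp
  next
    assume "n \<ge> 3" "m \<ge> 3" then show False using assms Kd r3[of n] r3[of m] r23 by simp
  qed
qed

lemma hp_zero: "j \<in> {0,1,2} \<Longrightarrow> hp \<beta> j 0 w \<longleftrightarrow> hp \<beta> 0 0 w"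
proof -
  have "cc \<beta> - cc \<beta> * (1/\<beta>) = (cc \<beta> * (\<beta> - 1)) / \<beta>" using nz by (simp add: field_simps)
  then have "cc \<beta> - cc \<beta> * rr \<beta> 0 = rr \<beta> 0" unfolding rr_vals c_eq by simp
  then show "j \<in> {0,1,2} \<Longrightarrow> ?thesis" by (auto simp: hp_simps hp_simps_Suc0)
qed

lemma sumXYZ: "\<beta> * fst z + \<beta> * snd z + \<beta> * ct \<beta> z = cc \<beta> + 1"
  unfolding ct_def using c_eq by (simp add: algebra_simps)

lemma obtain_other:
  assumes "gq \<beta> i z \<in> UU \<beta>" "i \<in> {0,1,2}" "z \<notin> UU \<beta>"
  shows "\<exists>j\<in>{0,1,2}. j \<noteq> i \<and> (\<exists>m. m \<ge> 1 \<and> hp \<beta> j m (gq \<beta> i z))"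
proof -
  obtain j m where j: "j \<in> {0,1,2}" and h: "hp \<beta> j m (gq \<beta> i z)" using assms(1) unfolding UU_def by blast
  have ne: "\<not> hp \<beta> i k (gq \<beta> i z)" for k
  proof
    assume "hp \<beta> i k (gq \<beta> i z)"
    then have "hp \<beta> i (Suc k) z" using hp_gq_same assms(2) by blast
    then show False using assms(2,3) unfolding UU_def by blast
  qed
  have "j \<noteq> i" using ne h by blast
  moreover have "m \<noteq> 0"
  proof
    assume "m = 0"
    then have "hp \<beta> i 0 (gq \<beta> i z)" using h hp_zero j assms(2) by blast
    then show False using ne by blast
  qed
  ultimately show ?thesis using j h by (metis One_nat_def Suc_leI neq0_conv)
qed

lemma TT_gq:
  "gq \<beta> 0 z \<in> TT \<beta> \<longleftrightarrow> \<beta> * fst z \<ge> 0 \<and> \<beta> * snd z \<ge> 0 \<and> \<beta> * ct \<beta> z - 1 \<ge> 0"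
  "gq \<beta> 1 z \<in> TT \<beta> \<longleftrightarrow> \<beta> * fst z - 1 \<ge> 0 \<and> \<beta> * snd z \<ge> 0 \<and> \<beta> * ct \<beta> z \<ge> 0"
  "gq \<beta> 2 z \<in> TT \<beta> \<longleftrightarrow> \<beta> * fst z \<ge> 0 \<and> \<beta> * snd z - 1 \<ge> 0 \<and> \<beta> * ct \<beta> z \<ge> 0"
  unfolding TT_def by (simp_all add: gq_coords gq_coords_Suc0 ct_gq)

lemma TT_gq_Suc0:
  "gq \<beta> (Suc 0) z \<in> TT \<beta> \<longleftrightarrow> \<beta> * fst z - 1 \<ge> 0 \<and> \<beta> * snd z \<ge> 0 \<and> \<beta> * ct \<beta> z \<ge> 0"
  using TT_gq(2) by simp

lemma TT_scaled: "z \<in> TT \<beta> \<Longrightarrow> \<beta> * fst z \<ge> 0 \<and> \<beta> * snd z \<ge> 0 \<and> \<beta> * ct \<beta> z \<ge> 0"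
  unfolding TT_def using bpos by simp

lemma caseT:
  assumes z: "z \<in> TT \<beta>" "z \<notin> UU \<beta>" and H: "\<forall>i\<in>{0,1,2}. gq \<beta> i z \<in> TT \<beta> \<longrightarrow> gq \<beta> i z \<in> UU \<beta>"
    and Z: "\<beta> * ct \<beta> z \<ge> 1"
  shows False
proof -
  note S = sumXYZ[of z] TT_scaled[OF z(1)]
  have "gq \<beta> 0 z \<in> TT \<beta>" using S Z TT_gq by simp
  then obtain j m where j: "j \<in> {1,2}" "m \<ge> 1" "hp \<beta> j m (gq \<beta> 0 z)"
    using H obtain_other[of 0 z] z by fastforce
  have rm: "rr \<beta> m \<le> rr \<beta> 1" using j(2) by (rule rr_le1)
  show False
  proof (cases "j = 1")
    case True
    then have h: "\<beta> * snd z < rr \<beta> m" "\<beta> * ct \<beta> z - 1 < rr \<beta> m" "\<beta> * fst z < cc \<beta> - cc \<beta> * rr \<beta> m"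
      using j by (simp_all add: hp_simps hp_simps_Suc0 gq_coords gq_coords_Suc0 ct_gq)
    have "gq \<beta> 1 z \<in> TT \<beta>" using S h rm K0 TT_gq by simp
    then obtain j' m' where j': "j' \<in> {0,2}" "m' \<ge> 1" "hp \<beta> j' m' (gq \<beta> 1 z)"
      using H obtain_other[of 1 z] z by fastforce
    show False
    proof (cases "j' = 0")
      case True
      then have h': "\<beta> * fst z - 1 < rr \<beta> m'" "\<beta> * snd z < rr \<beta> m'" "\<beta> * ct \<beta> z < cc \<beta> - cc \<beta> * rr \<beta> m'"
        using j' by (simp_all add: hp_simps hp_simps_Suc0 gq_coords gq_coords_Suc0 ct_gq)
      show False
        by (rule key[of "\<beta> * fst z - 1" "\<beta> * snd z" "\<beta> * ct \<beta> z - 1" m m']) (use h h' S j(2) j'(2) in auto)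
    next
      case False
      then have "\<beta> * ct \<beta> z < rr \<beta> m'" using j' by (simp_all add: hp_simps hp_simps_Suc0 gq_coords gq_coords_Suc0 ct_gq)
      then show False using Z rr0_lt1[of m'] by simp
    qed
  next
    case False
    then have h: "\<beta> * fst z < rr \<beta> m" "\<beta> * ct \<beta> z - 1 < rr \<beta> m" "\<beta> * snd z < cc \<beta> - cc \<beta> * rr \<beta> m"
      using j by (simp_all add: hp_simps hp_simps_Suc0 gq_coords gq_coords_Suc0 ct_gq)
    have "gq \<beta> 2 z \<in> TT \<beta>" using S h rm K0 TT_gq by simp
    then obtain j' m' where j': "j' \<in> {0,1}" "m' \<ge> 1" "hp \<beta> j' m' (gq \<beta> 2 z)"
      using H obtain_other[of 2 z] z by fastforce
    show False
    proof (cases "j' = 0")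
      case True
      then have h': "\<beta> * fst z < rr \<beta> m'" "\<beta> * snd z - 1 < rr \<beta> m'" "\<beta> * ct \<beta> z < cc \<beta> - cc \<beta> * rr \<beta> m'"
        using j' by (simp_all add: hp_simps hp_simps_Suc0 gq_coords gq_coords_Suc0 ct_gq)
      show False
        by (rule key[of "\<beta> * snd z - 1" "\<beta> * fst z" "\<beta> * ct \<beta> z - 1" m m']) (use h h' S j(2) j'(2) in auto)
    next
      case False
      then have "\<beta> * ct \<beta> z < rr \<beta> m'" using j' by (simp_all add: hp_simps hp_simps_Suc0 gq_coords gq_coords_Suc0 ct_gq)
      then show False using Z rr0_lt1[of m'] by simp
    qed
  qed
qed

lemma caseX:
  assumes z: "z \<in> TT \<beta>" "z \<notin> UU \<beta>" and H: "\<forall>i\<in>{0,1,2}. gq \<beta> i z \<in> TT \<beta> \<longrightarrow> gq \<beta> i z \<in> UU \<beta>"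
    and X: "\<beta> * fst z \<ge> 1"
  shows False
proof -
  note S = sumXYZ[of z] TT_scaled[OF z(1)]
  have "gq \<beta> 1 z \<in> TT \<beta>" using S X TT_gq by simp
  then obtain j m where j: "j \<in> {0,2}" "m \<ge> 1" "hp \<beta> j m (gq \<beta> 1 z)"
    using H obtain_other[of 1 z] z by fastforce
  have rm: "rr \<beta> m \<le> rr \<beta> 1" using j(2) by (rule rr_le1)
  show False
  proof (cases "j = 0")
    case True
    then have h: "\<beta> * fst z - 1 < rr \<beta> m" "\<beta> * snd z < rr \<beta> m" "\<beta> * ct \<beta> z < cc \<beta> - cc \<beta> * rr \<beta> m"
      using j by (simp_all add: hp_simps hp_simps_Suc0 gq_coords gq_coords_Suc0 ct_gq)
    have "\<beta> * ct \<beta> z \<ge> 1" using S h rm K0 by simp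
    then show False using caseT z H by blast
  next
    case False
    then have h: "\<beta> * fst z - 1 < rr \<beta> m" "\<beta> * ct \<beta> z < rr \<beta> m" "\<beta> * snd z < cc \<beta> - cc \<beta> * rr \<beta> m"
      using j by (simp_all add: hp_simps hp_simps_Suc0 gq_coords gq_coords_Suc0 ct_gq)
    have "gq \<beta> 2 z \<in> TT \<beta>" using S h rm K0 TT_gq by simp
    then obtain j' m' where j': "j' \<in> {0,1}" "m' \<ge> 1" "hp \<beta> j' m' (gq \<beta> 2 z)"
      using H obtain_other[of 2 z] z by fastforce
    have rm': "rr \<beta> m' \<le> rr \<beta> 1" using j'(2) by (rule rr_le1)
    show False
    proof (cases "j' = 0")
      case True
      then have h': "\<beta> * fst z < rr \<beta> m'" "\<beta> * snd z - 1 < rr \<beta> m'" "\<beta> * ct \<beta> z < cc \<beta> - cc \<beta> * rr \<beta> m'"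
        using j' by (simp_all add: hp_simps hp_simps_Suc0 gq_coords gq_coords_Suc0 ct_gq)
      have "\<beta> * ct \<beta> z \<ge> 1" using S h' rm' K0 by simp
      then show False using caseT z H by blast
    next
      case False
      then have h': "\<beta> * snd z - 1 < rr \<beta> m'" "\<beta> * ct \<beta> z < rr \<beta> m'" "\<beta> * fst z < cc \<beta> - cc \<beta> * rr \<beta> m'"
        using j' by (simp_all add: hp_simps hp_simps_Suc0 gq_coords gq_coords_Suc0 ct_gq)
      show False
        by (rule key[of "\<beta> * snd z - 1" "\<beta> * ct \<beta> z" "\<beta> * fst z - 1" m m']) (use h h' S j(2) j'(2) in auto)
    qed
  qed
qed

lemma caseY:
  assumes z: "z \<in> TT \<beta>" "z \<notin> UU \<beta>" and H: "\<forall>i\<in>{0,1,2}. gq \<beta> i z \<in> TT \<beta> \<longrightarrow> gq \<beta> i z \<in> UU \<beta>"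
    and Y: "\<beta> * snd z \<ge> 1"
  shows False
proof -
  note S = sumXYZ[of z] TT_scaled[OF z(1)]
  have "gq \<beta> 2 z \<in> TT \<beta>" using S Y TT_gq by simp
  then obtain j m where j: "j \<in> {0,1}" "m \<ge> 1" "hp \<beta> j m (gq \<beta> 2 z)"
    using H obtain_other[of 2 z] z by fastforce
  have rm: "rr \<beta> m \<le> rr \<beta> 1" using j(2) by (rule rr_le1)
  show False
  proof (cases "j = 0")
    case True
    then have h: "\<beta> * fst z < rr \<beta> m" "\<beta> * snd z - 1 < rr \<beta> m" "\<beta> * ct \<beta> z < cc \<beta> - cc \<beta> * rr \<beta> m"
      using j by (simp_all add: hp_simps hp_simps_Suc0 gq_coords gq_coords_Suc0 ct_gq)
    have "\<beta> * ct \<beta> z \<ge> 1" using S h rm K0 by simp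
    then show False using caseT z H by blast
  next
    case False
    then have h: "\<beta> * snd z - 1 < rr \<beta> m" "\<beta> * ct \<beta> z < rr \<beta> m" "\<beta> * fst z < cc \<beta> - cc \<beta> * rr \<beta> m"
      using j by (simp_all add: hp_simps hp_simps_Suc0 gq_coords gq_coords_Suc0 ct_gq)
    have "\<beta> * fst z \<ge> 1" using S h rm K0 by simp
    then show False using caseX z H by blast
  qed
qed

lemma K_sub_FK:
  assumes z: "z \<in> KK \<beta>"
  shows "\<exists>i\<in>{0,1,2}. gq \<beta> i z \<in> KK \<beta>"
proof (rule ccontr)
  assume "\<not> ?thesis"
  then have H: "\<forall>i\<in>{0,1,2}. gq \<beta> i z \<in> TT \<beta> \<longrightarrow> gq \<beta> i z \<in> UU \<beta>" unfolding KK_def by blast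
  have zT: "z \<in> TT \<beta>" "z \<notin> UU \<beta>" using z unfolding KK_def by auto
  then have "\<not> hp \<beta> 0 0 z" unfolding UU_def by blast
  moreover have "cc \<beta> - cc \<beta> * rr \<beta> 0 = rr \<beta> 0"
  proof -
    have "cc \<beta> - cc \<beta> * (1/\<beta>) = (cc \<beta> * (\<beta> - 1)) / \<beta>" using nz by (simp add: field_simps)
    then show ?thesis unfolding rr_vals c_eq by simp
  qed
  ultimately have "fst z \<ge> 1/\<beta> \<or> snd z \<ge> 1/\<beta> \<or> ct \<beta> z \<ge> 1/\<beta>" unfolding hp_simps rr_vals by auto
  then have "\<beta> * fst z \<ge> 1 \<or> \<beta> * snd z \<ge> 1 \<or> \<beta> * ct \<beta> z \<ge> 1" using bpos by (auto simp: field_simps)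
  then show False using caseT[OF zT H] caseX[OF zT H] caseY[OF zT H] by blast
qed

lemma rr0_c: "cc \<beta> - cc \<beta> * rr \<beta> 0 = rr \<beta> 0"
proof -
  have "cc \<beta> - cc \<beta> * (1/\<beta>) = (cc \<beta> * (\<beta> - 1)) / \<beta>" using nz by (simp add: field_simps)
  then show ?thesis unfolding rr_vals c_eq by simp
qed

lemma c_gt: "2 * rr \<beta> 0 < cc \<beta>"
  unfolding rr_vals cc_def using bpos by (simp add: field_simps)

lemma c_gt1: "1 < cc \<beta>" using K0 rr_pos[of 1] by simp

lemma crr_ge: "rr \<beta> n \<le> cc \<beta> * rr \<beta> n"
  using c_gt1 rr_pos[of n] by simp

lemma rr_le0: "rr \<beta> n \<le> rr \<beta> 0" by (rule rr_mono) simp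

lemma lt_rr0: "u < rr \<beta> 0 \<Longrightarrow> \<beta> * u < 1"
  unfolding rr_vals using bpos by (simp add: field_simps)

lemma lt_rr0_iff: "\<beta> * u < 1 \<longleftrightarrow> u < rr \<beta> 0"
  unfolding rr_vals using bpos by (simp add: field_simps)

lemma ge1_nonneg: "1 \<le> \<beta> * u \<Longrightarrow> 0 \<le> u"
  using bpos by (smt (verit) mult_pos_neg)

lemma ct_sum: "fst z + snd z + ct \<beta> z = cc \<beta>" unfolding ct_def by simp

lemma hp_cases:
  assumes "hp \<beta> i n z" "i \<in> {0,1,2}"
  shows "(i = 0 \<and> fst z < rr \<beta> n \<and> snd z < rr \<beta> n \<and> ct \<beta> z < cc \<beta> - cc \<beta> * rr \<beta> n) \<or>
         (i = 1 \<and> snd z < rr \<beta> n \<and> ct \<beta> z < rr \<beta> n \<and> fst z < cc \<beta> - cc \<beta> * rr \<beta> n) \<or>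
         (i = 2 \<and> fst z < rr \<beta> n \<and> ct \<beta> z < rr \<beta> n \<and> snd z < cc \<beta> - cc \<beta> * rr \<beta> n)"
  using assms by (auto simp: hp_def)

lemma small1:
  assumes "hp \<beta> j n z" "j \<in> {0,1,2}"
  shows "(j = 0 \<longrightarrow> \<beta> * fst z < 1 \<and> \<beta> * snd z < 1) \<and> (j = 1 \<longrightarrow> \<beta> * snd z < 1 \<and> \<beta> * ct \<beta> z < 1)
     \<and> (j = 2 \<longrightarrow> \<beta> * fst z < 1 \<and> \<beta> * ct \<beta> z < 1)"
  unfolding lt_rr0_iff using hp_cases[OF assms] rr_le0[of n] by auto

lemma small0:
  assumes "hp \<beta> j 0 z" "j \<in> {0,1,2}"
  shows "\<beta> * fst z < 1 \<and> \<beta> * snd z < 1 \<and> \<beta> * ct \<beta> z < 1"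
proof -
  have "hp \<beta> 0 0 z" using assms hp_zero by blast
  then show ?thesis unfolding lt_rr0_iff using rr0_c by (auto simp: hp_simps)
qed

lemma FK_sub_K:
  assumes w: "w \<in> KK \<beta>" and i: "i \<in> {0,1,2}"
  shows "fq \<beta> i w \<in> KK \<beta>"
proof -
  define z where "z = fq \<beta> i w"
  have g: "gq \<beta> i z = w" unfolding z_def using gq_fq bpos by simp
  have wT: "gq \<beta> i z \<in> TT \<beta>" "gq \<beta> i z \<notin> UU \<beta>" using w g unfolding KK_def by auto
  have zT: "z \<in> TT \<beta>"
    using i wT(1) bpos ge1_nonneg[of "fst z"] ge1_nonneg[of "snd z"] ge1_nonneg[of "ct \<beta> z"] unfolding TT_def
    by (elim three_cases) (auto simp: gq_coords gq_coords_Suc0 ct_gq zero_le_mult_iff)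
  have "\<not> hp \<beta> j n z" if j: "j \<in> {0,1,2}" for j n
  proof
    assume h: "hp \<beta> j n z"
    show False
    proof (cases "j = i \<and> n \<noteq> 0")
      case True
      then obtain k where "n = Suc k" by (metis not0_implies_Suc)
      then have "hp \<beta> i k (gq \<beta> i z)" using h True hp_gq_same i by simp
      then show False using wT(2) i unfolding UU_def by blast
    next
      case False
      then have "j \<noteq> i \<or> n = 0" by blast
      then show False
      proof
        assume "n = 0"
        then have "\<beta> * fst z < 1 \<and> \<beta> * snd z < 1 \<and> \<beta> * ct \<beta> z < 1" using small0 h j by blast
        then show False using wT(1) i by (elim three_cases) (auto simp: TT_gq TT_gq_Suc0)
      next
        assume "j \<noteq> i"
        then show False using small1[OF h j] wT(1) i j
          by (elim three_cases) (auto simp: TT_gq TT_gq_Suc0)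
      qed
    qed
  qed
  then have "z \<notin> UU \<beta>" unfolding UU_def by blast
  then show ?thesis using zT unfolding KK_def z_def by blast
qed

lemma UU_sub_TT: "UU \<beta> \<subseteq> TT \<beta>"
proof
  fix z assume "z \<in> UU \<beta>"
  then obtain i n where i: "i \<in> {0,1,2}" and h: "hp \<beta> i n z" unfolding UU_def by blast
  have f: "rr \<beta> n \<le> rr \<beta> 0" "rr \<beta> n \<le> cc \<beta> * rr \<beta> n" "0 < rr \<beta> n"
    using rr_le0 crr_ge rr_pos by auto
  show "z \<in> TT \<beta>"
    using hp_cases[OF h i] f c_gt ct_sum[of z] unfolding TT_def mem_Collect_eq
    by (elim disjE conjE; linarith)
qed

lemma rr_lt2: "n < m \<Longrightarrow> 2 * rr \<beta> m < cc \<beta> * rr \<beta> n"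
proof -
  assume "n < m"
  then have "rr \<beta> m \<le> rr \<beta> n / \<beta>" by (rule rr_lt)
  also have "\<dots> = rr \<beta> 0 * rr \<beta> n" unfolding rr_vals by simp
  finally have "2 * rr \<beta> m \<le> (2 * rr \<beta> 0) * rr \<beta> n" by simp
  also have "\<dots> < cc \<beta> * rr \<beta> n" using c_gt rr_pos[of n] by (intro mult_strict_right_mono) auto
  finally show ?thesis .
qed

lemma hole_eq:
  assumes i: "i \<in> {0,1,2}" and j: "j \<in> {0,1,2}" and h1: "hp \<beta> i n z" and h2: "hp \<beta> j m z"
  shows "{w. hp \<beta> i n w} = {w. hp \<beta> j m w}"
proof (cases "n = 0 \<and> m = 0")
  case True
  have "{w. hp \<beta> i 0 w} = {w. hp \<beta> 0 0 w}" "{w. hp \<beta> j 0 w} = {w. hp \<beta> 0 0 w}"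
    using hp_zero[OF i] hp_zero[OF j] by blast+
  then show ?thesis using True by simp
next
  case nm: False
  show ?thesis
  proof (cases "i = j \<and> n = m")
    case True then show ?thesis by simp
  next
    case False
    have f: "rr \<beta> n \<le> rr \<beta> 0" "rr \<beta> m \<le> rr \<beta> 0" "rr \<beta> 0 < 1"
      using rr_le0 rr0_lt1 by auto
    note C1 = hp_cases[OF h1 i] and C2 = hp_cases[OF h2 j]
    have F: False
    proof (cases "i = j")
      case True
      then have "n \<noteq> m" using False by simp
      then have "n < m \<or> m < n" by arith
      then show False
      proof
        assume nm: "n < m"
        have "2 * rr \<beta> m < cc \<beta> * rr \<beta> n" using rr_lt2 nm by blast
        then show False using C1 C2 True ct_sum[of z]
          by (elim disjE conjE; simp; linarith)
      next
        assume nm: "m < n"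
        have "2 * rr \<beta> n < cc \<beta> * rr \<beta> m" using rr_lt2 nm by blast
        then show False using C1 C2 True ct_sum[of z]
          by (elim disjE conjE; simp; linarith)
      qed
    next
      case ij: False
      have "n \<ge> 1 \<or> m \<ge> 1" using nm by auto
      then show False
      proof
        assume "n \<ge> 1"
        then have "rr \<beta> n \<le> rr \<beta> 1" by (rule rr_le1)
        then show False using C1 C2 ij f K0 ct_sum[of z] by (elim disjE conjE; simp; linarith)
      next
        assume "m \<ge> 1"
        then have "rr \<beta> m \<le> rr \<beta> 1" by (rule rr_le1)
        then show False using C1 C2 ij f K0 ct_sum[of z] by (elim disjE conjE; simp; linarith)
      qed
    qed
    then show ?thesis ..
  qed
qed

lemma image_hp: "i \<in> {0,1,2} \<Longrightarrow> (fq \<beta> i ^^ n) ` {w. hp \<beta> 0 0 w} = {w. hp \<beta> i n w}"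
proof (induction n)
  case 0
  then show ?case using hp_zero[OF 0] by auto
next
  case (Suc n)
  have "(fq \<beta> i ^^ Suc n) ` {w. hp \<beta> 0 0 w} = fq \<beta> i ` ((fq \<beta> i ^^ n) ` {w. hp \<beta> 0 0 w})"
    by (simp add: image_comp)
  also have "\<dots> = fq \<beta> i ` {w. hp \<beta> i n w}" using Suc by simp
  also have "\<dots> = {w. hp \<beta> i (Suc n) w}"
    by (rule set_eqI) (simp only: mem_fq_image[OF bpos(1)] mem_Collect_eq hp_gq_same[OF Suc.prems])
  finally show ?case .
qed

lemma FKK: "(\<Union>i\<in>{0,1,2}. fq \<beta> i ` KK \<beta>) = KK \<beta>"
proof
  show "(\<Union>i\<in>{0,1,2}. fq \<beta> i ` KK \<beta>) \<subseteq> KK \<beta>" using FK_sub_K by blast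
next
  show "KK \<beta> \<subseteq> (\<Union>i\<in>{0,1,2}. fq \<beta> i ` KK \<beta>)"
  proof
    fix z assume "z \<in> KK \<beta>"
    then obtain i where i: "i \<in> {0,1,2}" "gq \<beta> i z \<in> KK \<beta>" using K_sub_FK by blast
    then have "z \<in> fq \<beta> i ` KK \<beta>" using mem_fq_image[OF bpos(1)] by blast
    then show "z \<in> (\<Union>i\<in>{0,1,2}. fq \<beta> i ` KK \<beta>)" using i by blast
  qed
qed

lemma cont_ct: "continuous_on UNIV (ct \<beta>)"
  unfolding ct_def by (intro continuous_intros)

lemma open_hp: "open {z. hp \<beta> i n z}"
proof -
  have "open {z. fst z < a \<and> snd z < b \<and> ct \<beta> z < d}" for a b d
    by (intro open_Collect_conj open_Collect_less continuous_intros cont_ct)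
  note O1 = this
  have O2: "open {z. snd z < a \<and> ct \<beta> z < b \<and> fst z < d}" for a b d
    by (intro open_Collect_conj open_Collect_less continuous_intros cont_ct)
  have O3: "open {z. fst z < a \<and> ct \<beta> z < b \<and> snd z < d}" for a b d
    by (intro open_Collect_conj open_Collect_less continuous_intros cont_ct)
  show ?thesis
  proof (cases "i = 1")
    case True then show ?thesis using O2 by (simp add: hp_def)
  next
    case False
    show ?thesis
    proof (cases "i = 2")
      case True then show ?thesis using O3 by (simp add: hp_def)
    next
      case False2: False
      then show ?thesis using O1 False by (simp add: hp_def)
    qed
  qed
qed

lemma open_UU: "open (UU \<beta>)"
proof -
  have e: "UU \<beta> = (\<Union>i\<in>{0,1,2}. \<Union>n. {z. hp \<beta> i n z})" unfolding UU_def by blast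
  show ?thesis unfolding e by (intro open_UN ballI open_hp)
qed

lemma closed_TT: "closed (TT \<beta>)"
  unfolding TT_def
  by (intro closed_Collect_conj closed_Collect_le continuous_intros cont_ct)

lemma bounded_TT: "bounded (TT \<beta>)"
proof -
  have "TT \<beta> \<subseteq> cbox (0,0) (cc \<beta>, cc \<beta>)"
    unfolding TT_def ct_def by (auto simp: cbox_Pair_iff)
  then show ?thesis using bounded_cbox bounded_subset by blast
qed

lemma compact_KK: "compact (KK \<beta>)"
proof -
  have "closed (KK \<beta>)" unfolding KK_def using closed_TT open_UU by blast
  moreover have "bounded (KK \<beta>)" unfolding KK_def using bounded_TT bounded_subset by blast
  ultimately show ?thesis by (simp add: compact_eq_bounded_closed)
qed

lemma vertices_KK: "(0,0) \<in> KK \<beta>" "(cc \<beta>, 0) \<in> KK \<beta>" "(0, cc \<beta>) \<in> KK \<beta>"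
proof -
  have f: "0 < cc \<beta> * rr \<beta> n" "rr \<beta> n < cc \<beta>" for n
    using rr_pos[of n] c_gt1 rr_le0[of n] c_gt by (auto simp: mult_pos_pos)
  have "\<not> hp \<beta> i n z" if "i \<in> {0,1,2}" "z \<in> {(0,0), (cc \<beta>, 0), (0, cc \<beta>)}" for i n z
  proof
    assume "hp \<beta> i n z"
    from hp_cases[OF this \<open>i \<in> _\<close>] that(2) f[of n] show False
      unfolding ct_def by auto
  qed
  moreover have "z \<in> TT \<beta>" if "z \<in> {(0,0), (cc \<beta>, 0), (0, cc \<beta>)}" for z
    using that c_gt1 unfolding TT_def ct_def by auto
  ultimately show "(0,0) \<in> KK \<beta>" "(cc \<beta>, 0) \<in> KK \<beta>" "(0, cc \<beta>) \<in> KK \<beta>"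
    unfolding KK_def UU_def by blast+
qed

lemma S_beta_eq: "S_beta \<beta> = KK \<beta>"
  unfolding S_beta_def
proof (rule the_equality)
  show "KK \<beta> \<noteq> {} \<and> compact (KK \<beta>) \<and> KK \<beta> = (\<Union>i\<in>{0,1,2}. fq \<beta> i ` KK \<beta>)"
    using vertices_KK compact_KK FKK by auto
next
  fix S assume S: "S \<noteq> {} \<and> compact S \<and> S = (\<Union>i\<in>{0,1,2}. fq \<beta> i ` S)"
  have "S \<subseteq> KK \<beta>"
    by (rule attractor_sub[of \<beta>]) (use S bpos compact_KK vertices_KK FKK in auto)
  moreover have "KK \<beta> \<subseteq> S"
    by (rule attractor_sub[of \<beta>]) (use S bpos compact_KK vertices_KK FKK in auto)
  ultimately show "S = KK \<beta>" by blast
qed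

lemma inner_pair_gen: "inner (u1, u2) z = u1 * fst z + u2 * snd z"
  by (cases z) simp

lemma convex_shape: "convex {z :: real \<times> real. fst z < a \<and> snd z < b \<and> e < fst z + snd z}"
proof -
  have "{z :: real \<times> real. fst z < a \<and> snd z < b \<and> e < fst z + snd z} =
     {z. inner (1,0) z < a} \<inter> {z. inner (0,1) z < b} \<inter> {z. inner (-1,-1) z < -e}"
    by (auto simp: inner_pair_gen)
  then show ?thesis by (simp add: convex_Int convex_halfspace_lt)
qed

lemma hp_shape: "\<exists>a b e. {w. hp \<beta> i n w} = {z. fst z < a \<and> snd z < b \<and> e < fst z + snd z}"
proof (cases "i = 1")
  case True
  then show ?thesis
    by (intro exI[of _ "cc \<beta> - cc \<beta> * rr \<beta> n"] exI[of _ "rr \<beta> n"] exI[of _ "cc \<beta> - rr \<beta> n"])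
       (auto simp: hp_def ct_def)
next
  case False
  show ?thesis
  proof (cases "i = 2")
    case True
    then show ?thesis
      by (intro exI[of _ "rr \<beta> n"] exI[of _ "cc \<beta> - cc \<beta> * rr \<beta> n"] exI[of _ "cc \<beta> - rr \<beta> n"])
         (auto simp: hp_def ct_def)
  next
    case False2: False
    then show ?thesis using False
      by (intro exI[of _ "rr \<beta> n"] exI[of _ "rr \<beta> n"] exI[of _ "cc \<beta> * rr \<beta> n"])
         (auto simp: hp_def ct_def)
  qed
qed

lemma connected_hp: "connected {w. hp \<beta> i n w}"
proof -
  obtain a b e where "{w. hp \<beta> i n w} = {z. fst z < a \<and> snd z < b \<and> e < fst z + snd z}"
    using hp_shape[of i n] by blast
  then show ?thesis using convex_shape[of a b e] by (simp add: convex_connected)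
qed

lemma comp_eq:
  assumes i: "i \<in> {0,1,2}" and x: "hp \<beta> i n x"
  shows "connected_component_set (UU \<beta>) x = {w. hp \<beta> i n w}"
proof (rule connected_component_unique)
  show "x \<in> {w. hp \<beta> i n w}" using x by simp
  show "{w. hp \<beta> i n w} \<subseteq> UU \<beta>" using i unfolding UU_def by blast
  show "connected {w. hp \<beta> i n w}" by (rule connected_hp)
next
  fix c' assume c': "x \<in> c'" "c' \<subseteq> UU \<beta>" "connected c'"
  define W where "W = {w. hp \<beta> i n w}"
  define B where "B = \<Union>{V. (\<exists>j\<in>{0,1,2}. \<exists>m. V = {w. hp \<beta> j m w}) \<and> V \<noteq> W}"
  have oW: "open W" unfolding W_def by (rule open_hp)
  have oB: "open B" unfolding B_def
  proof (rule open_Union)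
    show "\<forall>V\<in>{V. (\<exists>j\<in>{0,1,2}. \<exists>m. V = {w. hp \<beta> j m w}) \<and> V \<noteq> W}. open V"
      using open_hp by blast
  qed
  have WB0: "W \<inter> B = {}"
  proof (rule ccontr)
    assume "W \<inter> B \<noteq> {}"
    then obtain z where zW: "z \<in> W" and zB: "z \<in> B" by blast
    from zB obtain V where V: "V \<in> {V. (\<exists>j\<in>{0,1,2}. \<exists>m. V = {w. hp \<beta> j m w}) \<and> V \<noteq> W}" and zV: "z \<in> V"
      unfolding B_def by (rule UnionE)
    from V obtain j m where j: "j \<in> {0,1,2}" and Ve: "V = {w. hp \<beta> j m w}" and VW: "V \<noteq> W" by blast
    have h1: "hp \<beta> i n z" using zW unfolding W_def by simp
    have h2: "hp \<beta> j m z" using zV Ve by simp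
    have "W = V" unfolding W_def Ve by (rule hole_eq[OF i j h1 h2])
    then show False using VW by simp
  qed
  then have WB: "W \<inter> B \<inter> c' = {}" by blast
  have cWB: "c' \<subseteq> W \<union> B"
  proof
    fix z assume "z \<in> c'"
    then have "z \<in> UU \<beta>" using c'(2) by blast
    then obtain j m where j: "j \<in> {0,1,2}" and h: "hp \<beta> j m z" unfolding UU_def by blast
    show "z \<in> W \<union> B"
    proof (cases "{w. hp \<beta> j m w} = W")
      case True then show ?thesis using h by blast
    next
      case False
      then have "{w. hp \<beta> j m w} \<in> {V. (\<exists>j\<in>{0,1,2}. \<exists>m. V = {w. hp \<beta> j m w}) \<and> V \<noteq> W}"
        using j by blast
      moreover have "z \<in> {w. hp \<beta> j m w}" using h by simp
      ultimately have "z \<in> B" unfolding B_def by (rule UnionI)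
      then show ?thesis by blast
    qed
  qed
  have "W \<inter> c' = {} \<or> B \<inter> c' = {}" using connectedD[OF c'(3) oW oB WB cWB] .
  moreover have "x \<in> W" unfolding W_def using x by simp
  ultimately have "B \<inter> c' = {}" using c'(1) by blast
  then show "c' \<subseteq> {w. hp \<beta> i n w}" using cWB unfolding W_def by blast
qed

lemma convex_TT: "convex (TT \<beta>)"
proof (rule convexI)
  fix x y :: "real \<times> real" and u v :: real
  assume xy: "x \<in> TT \<beta>" "y \<in> TT \<beta>" and uv0: "0 \<le> u" "0 \<le> v" "u + v = 1"
  then have uv: "0 \<le> u \<and> 0 \<le> v \<and> u + v = 1" by simp
  have e: "cc \<beta> - (u * fst x + v * fst y) - (u * snd x + v * snd y) = u * ct \<beta> x + v * ct \<beta> y"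
  proof -
    have "u * ct \<beta> x + v * ct \<beta> y = (u + v) * cc \<beta> - (u * fst x + v * fst y) - (u * snd x + v * snd y)"
      unfolding ct_def by (simp add: algebra_simps)
    then show ?thesis using uv by simp
  qed
  have f1: "0 \<le> u * fst x + v * fst y" "0 \<le> u * snd x + v * snd y" "0 \<le> u * ct \<beta> x + v * ct \<beta> y"
    using xy uv unfolding TT_def by (auto intro!: add_nonneg_nonneg mult_nonneg_nonneg)
  have f2: "ct \<beta> (u *\<^sub>R x + v *\<^sub>R y) = cc \<beta> - (u * fst x + v * fst y) - (u * snd x + v * snd y)"
    unfolding ct_def by simp
  show "u *\<^sub>R x + v *\<^sub>R y \<in> TT \<beta>"
    unfolding TT_def using f1 f2 e by simp
qed

lemma Delta_eq: "Delta \<beta> = TT \<beta>"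
proof
  show "Delta \<beta> \<subseteq> TT \<beta>"
    unfolding Delta_def S_beta_eq KK_def using convex_TT by (intro hull_minimal) auto
next
  have "TT \<beta> \<subseteq> convex hull {(0,0), (cc \<beta>, 0), (0, cc \<beta>)}"
  proof
    fix z assume z: "z \<in> TT \<beta>"
    obtain x y where zxy: "z = (x, y)" by (cases z)
    have cpos: "0 < cc \<beta>" using c_gt1 by simp
    have zeq: "z = (1 - x / cc \<beta> - y / cc \<beta>) *\<^sub>R (0,0) + (x / cc \<beta>) *\<^sub>R (cc \<beta>, 0) + (y / cc \<beta>) *\<^sub>R (0, cc \<beta>)"
      using zxy cpos by simp
    have "(x + y) / cc \<beta> \<le> 1" using z zxy cpos unfolding TT_def ct_def by simp
    then have "0 \<le> 1 - x / cc \<beta> - y / cc \<beta>" by (simp add: add_divide_distrib)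
    moreover have "0 \<le> x / cc \<beta>" "0 \<le> y / cc \<beta>"
      using z zxy cpos unfolding TT_def ct_def by auto
    ultimately have "\<exists>u v w. z = u *\<^sub>R (0,0) + v *\<^sub>R (cc \<beta>, 0) + w *\<^sub>R (0, cc \<beta>) \<and> 0 \<le> u \<and> 0 \<le> v \<and> 0 \<le> w \<and> u + v + w = 1"
      using zeq by (intro exI[of _ "1 - x / cc \<beta> - y / cc \<beta>"] exI[of _ "x / cc \<beta>"] exI[of _ "y / cc \<beta>"]) simp
    then show "z \<in> convex hull {(0,0), (cc \<beta>, 0), (0, cc \<beta>)}"
      unfolding convex_hull_3 by blast
  qed
  also have "\<dots> \<subseteq> Delta \<beta>"
    unfolding Delta_def S_beta_eq using vertices_KK by (intro hull_mono) auto
  finally show "TT \<beta> \<subseteq> Delta \<beta>" .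
qed

lemma Hc_eq: "Hc \<beta> = {w. hp \<beta> 0 0 w}"
proof (rule set_eqI)
  fix z
  have A: "z \<in> Hc \<beta> \<longleftrightarrow> z \<in> TT \<beta> \<and> gq \<beta> 0 z \<notin> TT \<beta> \<and> gq \<beta> 1 z \<notin> TT \<beta> \<and> gq \<beta> 2 z \<notin> TT \<beta>"
    by (simp add: Hc_def Delta_eq mem_fq_image[OF bpos(1)])
  have h: "hp \<beta> 0 0 z \<longleftrightarrow> \<beta> * fst z < 1 \<and> \<beta> * snd z < 1 \<and> \<beta> * ct \<beta> z < 1"
    unfolding hp_simps rr0_c lt_rr0_iff ..
  have B: "z \<in> TT \<beta> \<Longrightarrow> (gq \<beta> 0 z \<notin> TT \<beta> \<and> gq \<beta> 1 z \<notin> TT \<beta> \<and> gq \<beta> 2 z \<notin> TT \<beta>) \<longleftrightarrow> hp \<beta> 0 0 z"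
  proof -
    assume zT: "z \<in> TT \<beta>"
    note S = TT_scaled[OF zT]
    have g0: "gq \<beta> 0 z \<in> TT \<beta> \<longleftrightarrow> 1 \<le> \<beta> * ct \<beta> z" using S by (simp add: TT_gq(1))
    have g1: "gq \<beta> 1 z \<in> TT \<beta> \<longleftrightarrow> 1 \<le> \<beta> * fst z" using S by (simp add: TT_gq_Suc0)
    have g2: "gq \<beta> 2 z \<in> TT \<beta> \<longleftrightarrow> 1 \<le> \<beta> * snd z" using S by (simp add: TT_gq(3))
    show ?thesis unfolding g0 g1 g2 h by auto
  qed
  have C: "hp \<beta> 0 0 z \<Longrightarrow> z \<in> TT \<beta>" using UU_sub_TT unfolding UU_def by blast
  show "z \<in> Hc \<beta> \<longleftrightarrow> z \<in> {w. hp \<beta> 0 0 w}" using A B C by blast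
qed

lemma interior_ne: "interior (KK \<beta>) \<noteq> {}"
proof -
  define Op where "Op = {z. rr \<beta> 0 < fst z \<and> 0 < snd z \<and> rr \<beta> 0 < ct \<beta> z}"
  have oO: "open Op" unfolding Op_def
    by (intro open_Collect_conj open_Collect_less continuous_intros cont_ct)
  have "Op \<subseteq> KK \<beta>"
  proof
    fix z assume z: "z \<in> Op"
    have "z \<in> TT \<beta>" using z rr_pos[of 0] unfolding Op_def TT_def by auto
    moreover have "\<not> hp \<beta> j n z" if "j \<in> {0,1,2}" for j n
    proof
      assume "hp \<beta> j n z"
      from hp_cases[OF this that] z rr_le0[of n] show False unfolding Op_def by auto
    qed
    ultimately show "z \<in> KK \<beta>" unfolding KK_def UU_def by blast
  qed
  then have "Op \<subseteq> interior (KK \<beta>)" using oO by (rule interior_maximal)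
  moreover have "Op \<noteq> {}"
  proof -
    define e where "e = cc \<beta> - 2 * rr \<beta> 0"
    have "e > 0" unfolding e_def using c_gt by simp
    then have "(rr \<beta> 0 + e/4, e/4) \<in> Op"
      unfolding Op_def ct_def mem_Collect_eq fst_conv snd_conv using e_def by (intro conjI; linarith)
    then show ?thesis by blast
  qed
  ultimately show ?thesis by blast
qed

lemma holes:
  assumes "is_hole \<beta> C"
  shows "\<exists>i\<in>{0,1,2}. \<exists>n::nat. C = (fq \<beta> i ^^ n) ` Hc \<beta>"
proof -
  have D: "Delta \<beta> - S_beta \<beta> = UU \<beta>"
    unfolding Delta_eq S_beta_eq KK_def using UU_sub_TT by blast
  obtain x where x: "x \<in> UU \<beta>" and C: "C = connected_component_set (UU \<beta>) x"
    using assms unfolding is_hole_def D by blast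
  obtain i n where i: "i \<in> {0,1,2}" and h: "hp \<beta> i n x" using x unfolding UU_def by blast
  have "C = {w. hp \<beta> i n w}" using C comp_eq[OF i h] by simp
  also have "\<dots> = (fq \<beta> i ^^ n) ` Hc \<beta>" unfolding Hc_eq using image_hp[OF i] by simp
  finally show ?thesis using i by blast
qed

end

lemma poly_diff:
  fixes x y :: real
  shows "(x^3 - 2*x^2 + 2*x) - (y^3 - 2*y^2 + 2*y) = (x - y) * ((x-1)^2 + (y-1)^2 + x*y)"
  by (simp add: algebra_simps power2_eq_square power3_eq_cube)

lemma poly_bounds:
  fixes \<beta> \<beta>s :: real
  assumes "\<beta>s ^ 3 - 2 * \<beta>s ^ 2 + 2 * \<beta>s = 2" and "3 / 2 < \<beta>" and "\<beta> \<le> \<beta>s"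
  shows "\<beta> < 15437/10000" "\<beta>^3 - 2*\<beta>^2 + 2*\<beta> \<le> 2"
proof -
  have Q: "0 \<le> (x-1)^2 + (y-1)^2 + x*y" if "0 \<le> x" "0 \<le> y" for x y :: real
    using that by (intro add_nonneg_nonneg) auto
  have "0 \<le> (\<beta>s - \<beta>) * ((\<beta>s-1)^2 + (\<beta>-1)^2 + \<beta>s*\<beta>)"
    using assms Q[of \<beta>s \<beta>] by (intro mult_nonneg_nonneg) auto
  then show "\<beta>^3 - 2*\<beta>^2 + 2*\<beta> \<le> 2" using poly_diff[of \<beta>s \<beta>] assms(1) by linarith
  show "\<beta> < 15437/10000"
  proof (rule ccontr)
    assume "\<not> \<beta> < 15437/10000"
    then have B: "15437/10000 \<le> \<beta>s" using assms by simp
    define B0 :: real where "B0 = 15437/10000"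
    have "0 \<le> (\<beta>s - B0) * ((\<beta>s-1)^2 + (B0-1)^2 + \<beta>s*B0)"
      using B assms Q[of \<beta>s B0] unfolding B0_def by (intro mult_nonneg_nonneg) auto
    moreover have "B0^3 - 2*B0^2 + 2*B0 > 2" unfolding B0_def by (simp add: power3_eq_cube power2_eq_square)
    ultimately show False using poly_diff[of \<beta>s B0] assms(1) by linarith
  qed
qed

theorem proposition6p2:
  fixes \<beta> \<beta>s :: real
  assumes "\<beta>s ^ 3 - 2 * \<beta>s ^ 2 + 2 * \<beta>s = 2"
    and "3 / 2 < \<beta>" and "\<beta> \<le> \<beta>s"
  shows "interior (S_beta \<beta>) \<noteq> {} \<and>
    (\<forall>C. is_hole \<beta> C \<longrightarrow> (\<exists>i\<in>{0,1,2}. \<exists>n::nat. C = (fq \<beta> i ^^ n) ` Hc \<beta>))"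
proof -
  note pb = poly_bounds[OF assms]
  have "interior (S_beta \<beta>) \<noteq> {}"
    using S_beta_eq[OF assms(2) pb] interior_ne[OF assms(2) pb] by simp
  moreover have "\<forall>C. is_hole \<beta> C \<longrightarrow> (\<exists>i\<in>{0,1,2}. \<exists>n::nat. C = (fq \<beta> i ^^ n) ` Hc \<beta>)"
    using holes[OF assms(2) pb] by blast
  ultimately show ?thesis by blast
qed

end
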